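(* Let $\mathcal{A}$ be a complex Banach algebra with unity and $a\in\mathcal{A}$. The following are equivalent: (1) $a$ is g$\pi$-Hirano invertible; (2) $a-a^{n+1}\in\mathcal{A}^{qnil}$ for some positive integer $n$; (3) $a^{m}-a^{n}\in\mathcal{A}^{qnil}$ for some positive integers $m,n$ with $m\neq n$.
   Context: $\mathcal{A}^{qnil}$ denotes the set of quasinilpotent elements of $\mathcal{A}$, i.e. those $q$ with spectrum $\sigma(q)=\{0\}$. An element $a\in\mathcal{A}$ is g$\pi$-Hirano invertible if there exists $x\in\mathcal{A}$ with $xax=x$, $ax=xa$ and $a-a^{n+2}x\in\mathcal{A}^{qnil}$ for some positive integer $n$. *)

theory Defs
  imports "HOL-Analysis.Analysis"
begin

class complex_banach_algebra_1 = real_normed_algebra_1 + banach +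
  fixes scaleC :: "complex \<Rightarrow> 'a \<Rightarrow> 'a"
  assumes scaleC_of_real: "scaleC (complex_of_real r) x = scaleR r x"
    and scaleC_add_right: "scaleC c (x + y) = scaleC c x + scaleC c y"
    and scaleC_add_left: "scaleC (c + d) x = scaleC c x + scaleC d x"
    and scaleC_scaleC: "scaleC c (scaleC d x) = scaleC (c * d) x"
    and scaleC_one: "scaleC 1 x = x"
    and mult_scaleC_left: "scaleC c x * y = scaleC c (x * y)"
    and mult_scaleC_right: "x * scaleC c y = scaleC c (x * y)"
    and norm_scaleC: "norm (scaleC c x) = cmod c * norm x"

definition invertible_el :: "'a::ring_1 \<Rightarrow> bool" where
  "invertible_el x \<longleftrightarrow> (\<exists>y. x * y = 1 \<and> y * x = 1)"

definition spectrum :: "'a::complex_banach_algebra_1 \<Rightarrow> complex set" where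
  "spectrum a = {z. \<not> invertible_el (scaleC z 1 - a)}"

definition quasinilpotent :: "'a::complex_banach_algebra_1 \<Rightarrow> bool" where
  "quasinilpotent q \<longleftrightarrow> spectrum q = {0}"

definition gpi_Hirano_invertible :: "'a::complex_banach_algebra_1 \<Rightarrow> bool" where
  "gpi_Hirano_invertible a \<longleftrightarrow>
     (\<exists>x. x * a * x = x \<and> a * x = x * a \<and>
          (\<exists>n::nat. n \<ge> 1 \<and> quasinilpotent (a - a ^ (n + 2) * x)))"

end

theory Submission
  imports Defs "HOL-Computational_Algebra.Formal_Power_Series"
begin

definition cc :: "complex \<Rightarrow> 'a::complex_banach_algebra_1" where
  "cc c = scaleC c 1"

lemma scaleC_zero_left: "scaleC 0 (x::'a::complex_banach_algebra_1) = 0"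
proof -
  have "scaleC (0+0) x = scaleC 0 x + scaleC 0 x" by (rule scaleC_add_left)
  then show ?thesis by simp
qed

lemma scaleC_eq_cc: "scaleC c (x::'a::complex_banach_algebra_1) = cc c * x"
  unfolding cc_def by (simp add: mult_scaleC_left)

lemma cc_comm: "cc c * (x::'a::complex_banach_algebra_1) = x * cc c"
  unfolding cc_def by (simp add: mult_scaleC_left mult_scaleC_right)

lemma cc_add: "cc (c + d) = (cc c + cc d :: 'a::complex_banach_algebra_1)"
  unfolding cc_def by (simp add: scaleC_add_left)

lemma cc_mult: "cc (c * d) = (cc c * cc d :: 'a::complex_banach_algebra_1)"
  unfolding cc_def by (simp add: mult_scaleC_left scaleC_scaleC)

lemma cc_one[simp]: "cc 1 = (1 :: 'a::complex_banach_algebra_1)"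
  unfolding cc_def by (simp add: scaleC_one)

lemma cc_zero[simp]: "cc 0 = (0 :: 'a::complex_banach_algebra_1)"
  unfolding cc_def by (simp add: scaleC_zero_left)

lemma cc_of_real: "cc (complex_of_real r) = (of_real r :: 'a::complex_banach_algebra_1)"
  unfolding cc_def scaleC_of_real by (simp add: of_real_def)

lemma cc_of_nat: "cc (of_nat n) = (of_nat n :: 'a::complex_banach_algebra_1)"
  using cc_of_real[of "real n"] by simp

lemma cc_minus: "cc (- c) = (- cc c :: 'a::complex_banach_algebra_1)"
proof -
  have "cc c + cc (-c) = (0::'a)" using cc_add[of c "-c"] by simp
  then show ?thesis by (metis neg_eq_iff_add_eq_0)
qed

lemma cc_diff: "cc (c - d) = (cc c - cc d :: 'a::complex_banach_algebra_1)"
  using cc_add[of c "-d"] cc_minus[of d] by (metis diff_conv_add_uminus)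

lemma cc_power: "cc (c ^ k) = (cc c ^ k :: 'a::complex_banach_algebra_1)"
  by (induction k) (simp_all add: cc_mult)

lemma norm_cc: "norm (cc c :: 'a::complex_banach_algebra_1) = cmod c"
  unfolding cc_def by (simp add: norm_scaleC)

lemma cc_sum: "cc (sum f A) = (sum (\<lambda>i. cc (f i)) A :: 'a::complex_banach_algebra_1)"
  by (induction A rule: infinite_finite_induct) (simp_all add: cc_add)

section \<open>Inverses\<close>

definition inv_of :: "'a::ring_1 \<Rightarrow> 'a" where
  "inv_of u = (SOME y. u * y = 1 \<and> y * u = 1)"

lemma inv_of:
  assumes "invertible_el u"
  shows "u * inv_of u = 1" "inv_of u * u = 1"
proof -
  from assms have "\<exists>y. u * y = 1 \<and> y * u = 1" by (simp add: invertible_el_def)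
  then have "u * inv_of u = 1 \<and> inv_of u * u = 1"
    unfolding inv_of_def by (rule someI_ex)
  then show "u * inv_of u = 1" "inv_of u * u = 1" by auto
qed

lemma invertible_elI: "u * y = 1 \<Longrightarrow> y * u = 1 \<Longrightarrow> invertible_el u"
  by (auto simp: invertible_el_def)

lemma inv_unique:
  fixes u :: "'a::ring_1"
  assumes "u * y = 1" "z * u = 1" shows "y = z"
proof -
  have "z = z * (u * y)" using assms by simp
  also have "\<dots> = (z * u) * y" by (simp add: mult.assoc)
  finally show ?thesis using assms by simp
qed

lemma inv_of_eq:
  fixes u :: "'a::ring_1"
  assumes "u * y = 1" "y * u = 1" shows "inv_of u = y"
proof -
  have "invertible_el u" using assms by (rule invertible_elI)
  from inv_of[OF this] assms show ?thesis using inv_unique by metis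
qed

lemma inv_comm:
  fixes u :: "'a::ring_1"
  assumes "u * y = 1" "y * u = 1" "u * c = c * u"
  shows "y * c = c * y"
proof -
  have "y * c = y * c * (u * y)" using assms by simp
  also have "\<dots> = y * (c * u) * y" by (simp add: mult.assoc)
  also have "\<dots> = y * (u * c) * y" using assms by simp
  also have "\<dots> = (y * u) * c * y" by (simp add: mult.assoc)
  finally show ?thesis using assms by simp
qed

lemma power_comm:
  fixes u v :: "'a::ring_1"
  assumes "u * v = v * u" shows "u ^ k * v = v * u ^ k"
proof (induction k)
  case 0 then show ?case by simp
next
  case (Suc k)
  have "u ^ Suc k * v = u * (u ^ k * v)" by (simp add: mult.assoc)
  also have "\<dots> = u * (v * u ^ k)" using Suc by simp
  also have "\<dots> = (u * v) * u ^ k" by (simp add: mult.assoc)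
  also have "\<dots> = v * u ^ Suc k" using assms by (simp add: mult.assoc)
  finally show ?case .
qed

lemma power_mult_comm:
  fixes u v :: "'a::ring_1"
  assumes "u * v = v * u" shows "(u * v) ^ k = u ^ k * v ^ k"
proof (induction k)
  case 0 then show ?case by simp
next
  case (Suc k)
  have "(u * v) ^ Suc k = u * v * (u ^ k * v ^ k)" using Suc by simp
  also have "\<dots> = u * (v * u ^ k) * v ^ k" by (simp add: mult.assoc)
  also have "\<dots> = u * (u ^ k * v) * v ^ k" using power_comm[OF assms] by simp
  also have "\<dots> = u ^ Suc k * v ^ Suc k" by (simp add: mult.assoc power_commutes)
  finally show ?case .
qed

section \<open>Neumann series\<close>

lemma neumann:
  fixes w :: "'a::{real_normed_algebra_1,banach}"
  assumes "summable (\<lambda>k. norm (w ^ k))"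
  shows "(1 - w) * (\<Sum>k. w ^ k) = 1" "(\<Sum>k. w ^ k) * (1 - w) = 1"
proof -
  have s: "summable (\<lambda>k. w ^ k)" using assms by (rule summable_norm_cancel)
  have z: "(\<lambda>k. w ^ k) \<longlonglongrightarrow> 0" using s by (rule summable_LIMSEQ_zero)
  have p1: "(1 - w) * (\<Sum>k<n. w ^ k) = 1 - w ^ n" for n
  proof (induction n)
    case 0 then show ?case by simp
  next
    case (Suc n)
    have "(1 - w) * (\<Sum>k<Suc n. w ^ k) = (1 - w) * (\<Sum>k<n. w ^ k) + (1 - w) * w ^ n"
      by (simp add: distrib_left)
    also have "\<dots> = 1 - w ^ Suc n" using Suc.IH by (simp add: algebra_simps)
    finally show ?case .
  qed
  have p2: "(\<Sum>k<n. w ^ k) * (1 - w) = 1 - w ^ n" for n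
  proof -
    have "(\<Sum>k<n. w ^ k) * w = w * (\<Sum>k<n. w ^ k)"
      by (simp add: sum_distrib_left sum_distrib_right power_commutes)
    then have "(\<Sum>k<n. w ^ k) * (1 - w) = (1 - w) * (\<Sum>k<n. w ^ k)"
      by (simp add: algebra_simps)
    then show ?thesis using p1 by simp
  qed
  have L: "(\<lambda>n. \<Sum>k<n. w ^ k) \<longlonglongrightarrow> (\<Sum>k. w ^ k)"
    using s by (simp add: summable_LIMSEQ)
  have R: "(\<lambda>n. 1 - w ^ n) \<longlonglongrightarrow> 1"
    using tendsto_diff[OF tendsto_const z] by simp
  have "(\<lambda>n. (1 - w) * (\<Sum>k<n. w ^ k)) \<longlonglongrightarrow> (1 - w) * (\<Sum>k. w ^ k)"
    by (intro tendsto_intros L)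
  then have "(\<lambda>n. 1 - w ^ n) \<longlonglongrightarrow> (1 - w) * (\<Sum>k. w ^ k)" by (simp only: p1)
  then show "(1 - w) * (\<Sum>k. w ^ k) = 1" using R by (rule LIMSEQ_unique)
  have "(\<lambda>n. (\<Sum>k<n. w ^ k) * (1 - w)) \<longlonglongrightarrow> (\<Sum>k. w ^ k) * (1 - w)"
    by (intro tendsto_intros L)
  then have "(\<lambda>n. 1 - w ^ n) \<longlonglongrightarrow> (\<Sum>k. w ^ k) * (1 - w)" by (simp only: p2)
  then show "(\<Sum>k. w ^ k) * (1 - w) = 1" using R by (rule LIMSEQ_unique)
qed

lemma neumann_small:
  fixes w :: "'a::{real_normed_algebra_1,banach}"
  assumes "norm w < 1"
  shows "invertible_el (1 - w)" "norm (inv_of (1 - w) - 1) \<le> norm w / (1 - norm w)"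
proof -
  have g: "summable (\<lambda>k. norm w ^ k)" using assms by simp
  have sn: "summable (\<lambda>k. norm (w ^ k))"
    by (rule summable_comparison_test[OF _ g]) (simp add: norm_power_ineq)
  note N = neumann[OF sn]
  show "invertible_el (1 - w)" using N by (rule invertible_elI)
  have inv: "inv_of (1 - w) = (\<Sum>k. w ^ k)" using N by (rule inv_of_eq)
  have s: "summable (\<lambda>k. w ^ k)" using sn by (rule summable_norm_cancel)
  have "(\<Sum>k. w ^ Suc k) = (\<Sum>k. w ^ k) - 1"
    using suminf_split_head[OF s] by simp
  then have e: "inv_of (1 - w) - 1 = (\<Sum>k. w ^ Suc k)" using inv by simp
  have sn1: "summable (\<lambda>k. norm (w ^ Suc k))" using sn by (subst summable_Suc_iff)
  have g1: "summable (\<lambda>k. norm w ^ Suc k)" using g by (subst summable_Suc_iff)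
  have "norm (\<Sum>k. w ^ Suc k) \<le> (\<Sum>k. norm (w ^ Suc k))" by (rule summable_norm[OF sn1])
  also have "\<dots> \<le> (\<Sum>k. norm w ^ Suc k)"
    by (rule suminf_le[OF _ sn1 g1]) (simp add: norm_power_ineq del: power_Suc)
  also have "\<dots> = norm w * (\<Sum>k. norm w ^ k)"
    using suminf_mult[OF g, of "norm w"] by simp
  also have "\<dots> = norm w / (1 - norm w)"
    using suminf_geometric[of "norm w"] assms by simp
  finally show "norm (inv_of (1 - w) - 1) \<le> norm w / (1 - norm w)" using e by simp
qed

lemma inv_mult:
  fixes a b :: "'a::ring_1"
  assumes "invertible_el a" "invertible_el b" shows "invertible_el (a * b)"
proof -
  obtain x where x: "a * x = 1" "x * a = 1" using assms(1) by (auto simp: invertible_el_def)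
  obtain y where y: "b * y = 1" "y * b = 1" using assms(2) by (auto simp: invertible_el_def)
  have "a * b * (y * x) = a * (b * y) * x" by (simp add: mult.assoc)
  also have "\<dots> = 1" using x y by simp
  finally have 1: "a * b * (y * x) = 1" .
  have "y * x * (a * b) = y * (x * a) * b" by (simp add: mult.assoc)
  also have "\<dots> = 1" using x y by simp
  finally have 2: "y * x * (a * b) = 1" .
  show ?thesis using 1 2 by (rule invertible_elI)
qed

lemma cc_invertible:
  assumes "z \<noteq> 0" shows "invertible_el (cc z :: 'a::complex_banach_algebra_1)"
proof -
  have "cc z * cc (1/z) = (1::'a)" "cc (1/z) * cc z = (1::'a)"
    using assms by (simp_all flip: cc_mult)
  then show ?thesis by (rule invertible_elI)
qed

definition SQN :: "'a::real_normed_algebra_1 \<Rightarrow> bool" where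
  "SQN u \<longleftrightarrow> (\<forall>R>0. \<exists>C. \<forall>k. R ^ k * norm (u ^ k) \<le> C)"

lemma SQN_D:
  assumes "SQN u" "R > 0" obtains C where "\<And>k. R ^ k * norm (u ^ k) \<le> C"
  using assms unfolding SQN_def by blast

lemma SQN_C_pos:
  fixes u :: "'a::real_normed_algebra_1"
  assumes "\<And>k. R ^ k * norm (u ^ k) \<le> C" shows "C \<ge> (1::real)"
  using assms[of 0] by simp

lemma SQN_mult_comm:
  fixes u v :: "'a::real_normed_algebra_1"
  assumes "SQN u" "u * v = v * u" shows "SQN (u * v)"
  unfolding SQN_def
proof (intro allI impI)
  fix R :: real assume R: "R > 0"
  have "R * (norm v + 1) > 0" using R by (simp add: add_nonneg_pos)
  then obtain C where C: "\<And>k. (R * (norm v + 1)) ^ k * norm (u ^ k) \<le> C"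
    using SQN_D[OF assms(1)] by blast
  show "\<exists>C. \<forall>k. R ^ k * norm ((u * v) ^ k) \<le> C"
  proof (intro exI allI)
    fix k
    have "norm ((u * v) ^ k) \<le> norm (u ^ k) * norm v ^ k"
      unfolding power_mult_comm[OF assms(2)]
      by (rule order.trans[OF norm_mult_ineq]) (simp add: mult_left_mono norm_power_ineq)
    then have "R ^ k * norm ((u * v) ^ k) \<le> R ^ k * (norm (u ^ k) * norm v ^ k)"
      using R by (simp add: mult_left_mono)
    also have "\<dots> \<le> R ^ k * (norm (u ^ k) * (norm v + 1) ^ k)"
      using R by (intro mult_left_mono power_mono) auto
    also have "\<dots> = (R * (norm v + 1)) ^ k * norm (u ^ k)"
      by (simp add: power_mult_distrib)
    also have "\<dots> \<le> C" by (rule C)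
    finally show "R ^ k * norm ((u * v) ^ k) \<le> C" .
  qed
qed

lemma SQN_mult_comm':
  fixes u v :: "'a::real_normed_algebra_1"
  assumes "SQN u" "u * v = v * u" shows "SQN (v * u)"
  using SQN_mult_comm[OF assms] assms(2) by simp

lemma SQN_power_imp:
  fixes u :: "'a::real_normed_algebra_1"
  assumes "SQN (u ^ n)" "n > 0" shows "SQN u"
  unfolding SQN_def
proof (intro allI impI)
  fix R :: real assume R: "R > 0"
  obtain C where C: "\<And>d. (R ^ n) ^ d * norm ((u ^ n) ^ d) \<le> C"
    using assms(1) R by (meson SQN_D zero_less_power)
  have C0: "C \<ge> 0" using C[of 0] by simp
  show "\<exists>C. \<forall>k. R ^ k * norm (u ^ k) \<le> C"
  proof (intro exI allI)
    fix k
    define d where "d = k div n"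
    define j where "j = k mod n"
    have kdj: "k = n * d + j" by (simp add: d_def j_def)
    have jn: "j < n" using assms(2) by (simp add: j_def)
    have "u ^ k = (u ^ n) ^ d * u ^ j" by (simp add: kdj power_add power_mult)
    then have "norm (u ^ k) \<le> norm ((u ^ n) ^ d) * norm (u ^ j)"
      by (simp add: norm_mult_ineq)
    also have "\<dots> \<le> norm ((u ^ n) ^ d) * norm u ^ j"
      by (intro mult_left_mono norm_power_ineq) simp
    finally have "norm (u ^ k) \<le> norm ((u ^ n) ^ d) * norm u ^ j" .
    moreover have Rk: "R ^ k = (R ^ n) ^ d * R ^ j" by (simp add: kdj power_add power_mult)
    ultimately have "R ^ k * norm (u ^ k) \<le> ((R ^ n) ^ d * R ^ j) * (norm ((u ^ n) ^ d) * norm u ^ j)"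
      using R by (simp add: mult_left_mono)
    also have "\<dots> = ((R ^ n) ^ d * norm ((u ^ n) ^ d)) * (R * norm u) ^ j"
      by (simp add: power_mult_distrib mult_ac)
    finally have "R ^ k * norm (u ^ k) \<le> ((R ^ n) ^ d * norm ((u ^ n) ^ d)) * (R * norm u) ^ j" .
    also have "\<dots> \<le> C * (R * norm u) ^ j"
      using C[of d] R by (intro mult_right_mono) auto
    also have "\<dots> \<le> C * (1 + R * norm u) ^ n"
    proof (rule mult_left_mono[OF _ C0])
      have "(R * norm u) ^ j \<le> (1 + R * norm u) ^ j"
        using R by (intro power_mono) auto
      also have "\<dots> \<le> (1 + R * norm u) ^ n"
        using R jn by (intro power_increasing) auto
      finally show "(R * norm u) ^ j \<le> (1 + R * norm u) ^ n" .
    qed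
    finally show "R ^ k * norm (u ^ k) \<le> C * (1 + R * norm u) ^ n" .
  qed
qed

lemma power_add_orth:
  fixes u v :: "'a::ring_1"
  assumes "u * v = 0" "v * u = 0" "k > 0"
  shows "(u + v) ^ k = u ^ k + v ^ k"
  using assms(3)
proof (induction k)
  case 0 then show ?case by simp
next
  case (Suc k)
  show ?case
  proof (cases "k = 0")
    case True then show ?thesis by simp
  next
    case False
    then obtain m where m: "k = Suc m" by (cases k) auto
    have uv: "u ^ k * v = 0" using assms(1) by (metis m power_Suc2 mult.assoc mult_zero_right)
    have vu: "v ^ k * u = 0" using assms(2) by (metis m power_Suc2 mult.assoc mult_zero_right)
    have "(u + v) ^ Suc k = (u + v) ^ k * (u + v)" by (rule power_Suc2)
    also have "\<dots> = (u ^ k + v ^ k) * (u + v)" using Suc.IH False by simp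
    finally have "(u + v) ^ Suc k = (u ^ k + v ^ k) * (u + v)" .
    also have "\<dots> = u ^ k * u + u ^ k * v + v ^ k * u + v ^ k * v" by (simp add: algebra_simps)
    also have "\<dots> = u ^ k * u + v ^ k * v" using uv vu by simp
    also have "\<dots> = u ^ Suc k + v ^ Suc k" by (simp only: power_Suc2)
    finally show ?thesis .
  qed
qed

lemma SQN_add_orth:
  fixes u v :: "'a::real_normed_algebra_1"
  assumes "SQN u" "SQN v" "u * v = 0" "v * u = 0" shows "SQN (u + v)"
  unfolding SQN_def
proof (intro allI impI)
  fix R :: real assume R: "R > 0"
  obtain C1 where C1: "\<And>k. R ^ k * norm (u ^ k) \<le> C1" using SQN_D[OF assms(1) R] by blast
  obtain C2 where C2: "\<And>k. R ^ k * norm (v ^ k) \<le> C2" using SQN_D[OF assms(2) R] by blast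
  have "C1 \<ge> 1" "C2 \<ge> 1" using SQN_C_pos C1 C2 by blast+
  show "\<exists>C. \<forall>k. R ^ k * norm ((u + v) ^ k) \<le> C"
  proof (intro exI allI)
    fix k
    show "R ^ k * norm ((u + v) ^ k) \<le> C1 + C2"
    proof (cases "k = 0")
      case True then show ?thesis using \<open>C1 \<ge> 1\<close> \<open>C2 \<ge> 1\<close> by simp
    next
      case False
      then have "(u + v) ^ k = u ^ k + v ^ k" using power_add_orth assms by blast
      then have "R ^ k * norm ((u + v) ^ k) \<le> R ^ k * norm (u ^ k) + R ^ k * norm (v ^ k)"
        using R by (simp add: distrib_left[symmetric] mult_left_mono norm_triangle_ineq)
      also have "\<dots> \<le> C1 + C2" using C1 C2 by (intro add_mono)
      finally show ?thesis .
    qed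
  qed
qed

lemma SQN_minus:
  fixes u :: "'a::real_normed_algebra_1"
  assumes "SQN u" shows "SQN (- u)"
proof -
  have "norm ((- u) ^ k) = norm (u ^ k)" for k
    by (cases "even k") (simp_all add: power_minus_odd)
  then show ?thesis using assms unfolding SQN_def by simp
qed

lemma SQN_idem_zero:
  fixes e :: "'a::real_normed_algebra_1"
  assumes "SQN e" "e * e = e" shows "e = 0"
proof (rule ccontr)
  assume ne: "e \<noteq> 0"
  have two: "(2::real) > 0" by simp
  obtain C where C: "\<And>k. 2 ^ k * norm (e ^ k) \<le> C" using SQN_D[OF assms(1) two] by blast
  have ek: "e ^ Suc k = e" for k by (induction k) (simp_all add: assms(2))
  obtain k where k: "C / norm e < 2 ^ k" using real_arch_pow[of 2 "C / norm e"] by auto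
  have "C < 2 ^ k * norm e" using k ne by (simp add: divide_less_eq)
  also have "\<dots> \<le> 2 ^ Suc k * norm e" by simp
  also have "\<dots> \<le> C" using C[of "Suc k"] ek by simp
  finally show False by simp
qed

lemma SQN_orth:
  fixes v :: "'a::real_normed_algebra_1"
  assumes "SQN v" "v * w = w * v" "v * w = e" "e * e = e" shows "e = 0"
  using SQN_idem_zero[OF SQN_mult_comm[OF assms(1,2)]] assms(3,4) by simp

lemma SQN_not_inv:
  fixes u :: "'a::real_normed_algebra_1"
  assumes "SQN u" shows "\<not> invertible_el u"
proof
  assume "invertible_el u"
  then obtain y where y: "u * y = 1" "y * u = 1" by (auto simp: invertible_el_def)
  have "(1::'a) = 0" using SQN_orth[OF assms, of y 1] y by simp
  then show False by simp
qed

lemma SQN_inv: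
  fixes u :: "'a::complex_banach_algebra_1"
  assumes "SQN u" "z \<noteq> 0"
  shows "invertible_el (cc z - u)"
proof -
  define w where "w = cc (1/z) * u"
  have R: "2 / cmod z > 0" using assms(2) by simp
  obtain C where C: "\<And>k. (2 / cmod z) ^ k * norm (u ^ k) \<le> C" using SQN_D[OF assms(1) R] by blast
  have wk: "norm (w ^ k) = (1 / cmod z) ^ k * norm (u ^ k)" for k
  proof -
    have "w ^ k = cc (1/z) ^ k * u ^ k"
      unfolding w_def by (rule power_mult_comm) (rule cc_comm)
    also have "\<dots> = cc ((1/z) ^ k) * u ^ k" by (simp add: cc_power)
    also have "\<dots> = scaleC ((1/z) ^ k) (u ^ k)" by (simp add: scaleC_eq_cc)
    finally show ?thesis by (simp add: norm_scaleC norm_power norm_divide)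
  qed
  have b: "norm (norm (w ^ k)) \<le> C * (1/2) ^ k" for k
  proof -
    have "(2 / cmod z) ^ k * norm (u ^ k) = 2 ^ k * norm (w ^ k)"
      by (simp add: wk power_divide)
    then have "2 ^ k * norm (w ^ k) \<le> C" using C by metis
    then have "norm (w ^ k) \<le> C / 2 ^ k" by (simp add: pos_le_divide_eq mult.commute)
    then show ?thesis by (simp add: power_one_over)
  qed
  have "summable (\<lambda>k. C * (1/2::real) ^ k)" by (intro summable_mult summable_geometric) simp
  then have sn: "summable (\<lambda>k. norm (w ^ k))"
    by (rule summable_comparison_test'[where N=0]) (use b in auto)
  note N = neumann[OF sn]
  have i1: "invertible_el (1 - w)" using N by (rule invertible_elI)
  have "cc z * w = (cc z * cc (1/z)) * u" by (simp add: w_def mult.assoc)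
  also have "\<dots> = u" using assms(2) by (simp flip: cc_mult)
  finally have "cc z - u = cc z * (1 - w)" by (simp add: right_diff_distrib)
  then show ?thesis using inv_mult[OF cc_invertible[OF assms(2)] i1] by simp
qed

lemma spectrum_cc: "spectrum q = {z. \<not> invertible_el (cc z - q)}"
  by (simp add: spectrum_def cc_def)

lemma SQN_imp_qnil:
  fixes q :: "'a::complex_banach_algebra_1"
  assumes "SQN q" shows "quasinilpotent q"
proof -
  have "\<not> invertible_el (- q)" using SQN_not_inv[OF SQN_minus[OF assms]] .
  then show ?thesis
    unfolding quasinilpotent_def spectrum_cc using SQN_inv[OF assms] by auto
qed

definition Fq :: "'a::complex_banach_algebra_1 \<Rightarrow> complex \<Rightarrow> 'a" where
  "Fq q t = inv_of (1 - cc t * q)"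

lemma Fq_inv:
  fixes q :: "'a::complex_banach_algebra_1"
  assumes HI: "\<And>t. invertible_el (1 - cc t * q)"
  shows "(1 - cc t * q) * Fq q t = 1" "Fq q t * (1 - cc t * q) = 1"
  using inv_of[OF HI[of t]] by (simp_all add: Fq_def)

lemma Fq_comm:
  fixes q :: "'a::complex_banach_algebra_1"
  assumes HI: "\<And>t. invertible_el (1 - cc t * q)"
  shows "Fq q t * q = q * Fq q t"
proof -
  have c: "q * (cc t * q) = cc t * (q * q)" by (metis cc_comm mult.assoc)
  have "(1 - cc t * q) * q = q * (1 - cc t * q)"
    using c by (simp add: algebra_simps)
  then show ?thesis using inv_comm[OF Fq_inv[OF HI]] by blast
qed

lemma Fq_0:
  fixes q :: "'a::complex_banach_algebra_1"
  shows "Fq q 0 = 1"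
  unfolding Fq_def by (rule inv_of_eq) simp_all

lemma norm_cc_mult: "norm (cc c * (x::'a::complex_banach_algebra_1)) = cmod c * norm x"
  by (simp flip: scaleC_eq_cc add: norm_scaleC)

lemma Fq_local:
  fixes q :: "'a::complex_banach_algebra_1"
  assumes HI: "\<And>t. invertible_el (1 - cc t * q)"
    and small: "cmod (t - t0) * (norm (Fq q t0) * norm q) \<le> 1/2"
  shows "norm (Fq q t - Fq q t0) \<le> 2 * (norm (Fq q t0) * norm q) * norm (Fq q t0) * cmod (t - t0)"
proof -
  define F0 where "F0 = Fq q t0"
  define K where "K = norm F0 * norm q"
  define w where "w = cc (t - t0) * (F0 * q)"
  define u0 where "u0 = 1 - cc t0 * q"
  have u0F: "u0 * F0 = 1" "F0 * u0 = 1" using Fq_inv[OF HI, of t0] by (simp_all add: u0_def F0_def)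
  have nw: "norm w \<le> cmod (t - t0) * K"
    unfolding w_def K_def norm_cc_mult
    by (intro mult_left_mono norm_mult_ineq) simp
  have nw2: "norm w \<le> 1/2" using nw small by (simp add: K_def F0_def)
  then have nw1: "norm w < 1" by simp
  note NS = neumann_small[OF nw1]
  define G where "G = inv_of (1 - w)"
  have G: "(1 - w) * G = 1" "G * (1 - w) = 1" using inv_of[OF NS(1)] by (simp_all add: G_def)
  have "u0 * w = (u0 * cc (t - t0)) * (F0 * q)" by (simp add: w_def mult.assoc)
  also have "\<dots> = (cc (t - t0) * u0) * (F0 * q)" by (simp add: cc_comm)
  also have "\<dots> = cc (t - t0) * ((u0 * F0) * q)" by (simp add: mult.assoc)
  also have "\<dots> = cc (t - t0) * q" using u0F by simp
  finally have "u0 * w = cc (t - t0) * q" .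
  then have fac: "1 - cc t * q = u0 * (1 - w)"
    by (simp add: u0_def right_diff_distrib cc_diff left_diff_distrib)
  have "(1 - cc t * q) * (G * F0) = u0 * ((1 - w) * G) * F0" by (simp add: fac mult.assoc)
  also have "\<dots> = 1" using G u0F by simp
  finally have i1: "(1 - cc t * q) * (G * F0) = 1" .
  have "(G * F0) * (1 - cc t * q) = G * (F0 * u0) * (1 - w)" by (simp add: fac mult.assoc)
  also have "\<dots> = 1" using G u0F by (simp add: mult.assoc)
  finally have i2: "(G * F0) * (1 - cc t * q) = 1" .
  have Ft: "Fq q t = G * F0" unfolding Fq_def using i1 i2 by (rule inv_of_eq)
  have "norm (Fq q t - F0) = norm ((G - 1) * F0)" by (simp add: Ft left_diff_distrib)
  also have "\<dots> \<le> norm (G - 1) * norm F0" by (rule norm_mult_ineq)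
  also have "\<dots> \<le> (2 * norm w) * norm F0"
  proof (rule mult_right_mono)
    have "norm (G - 1) \<le> norm w / (1 - norm w)" using NS(2) by (simp add: G_def)
    also have "\<dots> \<le> 2 * norm w"
      using mult_nonneg_nonneg[of "norm w" "1 - 2 * norm w"] nw2 by (simp add: divide_le_eq algebra_simps)
    finally show "norm (G - 1) \<le> 2 * norm w" .
  qed simp
  also have "\<dots> \<le> (2 * (cmod (t - t0) * K)) * norm F0"
    using nw by (intro mult_right_mono) auto
  finally show ?thesis by (simp add: F0_def K_def mult_ac)
qed

lemma Fq_cont:
  fixes q :: "'a::complex_banach_algebra_1"
  assumes HI: "\<And>t. invertible_el (1 - cc t * q)"
  shows "isCont (Fq q) t0"
proof -
  define K where "K = norm (Fq q t0) * norm q"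
  define B where "B = 2 * K * norm (Fq q t0)"
  have "((\<lambda>t. cmod (t - t0) * K) \<longlongrightarrow> cmod (t0 - t0) * K) (at t0)"
    by (intro tendsto_intros)
  then have "((\<lambda>t. cmod (t - t0) * K) \<longlongrightarrow> 0) (at t0)" by simp
  then have ev: "eventually (\<lambda>t. cmod (t - t0) * K < 1/2) (at t0)"
    by (rule order_tendstoD(2)) simp
  have ev2: "eventually (\<lambda>t. norm (Fq q t - Fq q t0) \<le> B * cmod (t - t0)) (at t0)"
    using ev
  proof eventually_elim
    case (elim t)
    then show ?case using Fq_local[OF HI, of t t0] by (simp add: B_def K_def)
  qed
  have "((\<lambda>t. B * cmod (t - t0)) \<longlongrightarrow> B * cmod (t0 - t0)) (at t0)"
    by (intro tendsto_intros)
  then have "((\<lambda>t. B * cmod (t - t0)) \<longlongrightarrow> 0) (at t0)" by simp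
  then have "((\<lambda>t. Fq q t - Fq q t0) \<longlongrightarrow> 0) (at t0)"
    by (rule Lim_null_comparison[OF ev2])
  then have "(Fq q \<longlongrightarrow> Fq q t0) (at t0)" by (rule LIM_zero_cancel)
  then show ?thesis by (simp add: isCont_def)
qed

lemma Fq_unifcont:
  fixes q :: "'a::complex_banach_algebra_1"
  assumes HI: "\<And>t. invertible_el (1 - cc t * q)" and e: "e > 0"
  shows "\<exists>d>0. \<forall>t t'. cmod t \<le> R \<longrightarrow> cmod t' \<le> R \<longrightarrow> cmod (t' - t) < d \<longrightarrow>
            norm (Fq q t' - Fq q t) < e"
proof -
  have "continuous_on (cball 0 R) (Fq q)"
    using Fq_cont[OF HI] by (intro continuous_at_imp_continuous_on) blast
  then have "uniformly_continuous_on (cball 0 R) (Fq q)"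
    by (rule compact_uniformly_continuous) simp
  then obtain d where "d > 0" and d: "\<forall>x\<in>cball 0 R. \<forall>x'\<in>cball 0 R. dist x' x < d \<longrightarrow>
      dist (Fq q x') (Fq q x) < e"
    using e unfolding uniformly_continuous_on_def by blast
  then show ?thesis
    by (intro exI[of _ d]) (auto simp: dist_norm)
qed

definition rt :: "nat \<Rightarrow> complex" where
  "rt N = cis (2 * pi / real N)"

lemma rt_pow: "rt N ^ k = cis (real k * (2 * pi / real N))"
  unfolding rt_def by (rule Complex.DeMoivre)

lemma rt_pow_N: "N > 0 \<Longrightarrow> rt N ^ N = 1"
  by (simp add: rt_pow)

lemma rt_pow_pow_N: "N > 0 \<Longrightarrow> (rt N ^ k) ^ N = 1"
  by (simp add: power_mult[symmetric] mult.commute[of k N] power_mult rt_pow_N)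

lemma norm_rt_pow[simp]: "cmod (rt N ^ k) = 1"
  by (simp add: rt_pow)

lemma rt_NM: "M > 0 \<Longrightarrow> rt (N * M) ^ M = rt N"
  unfolding rt_pow unfolding rt_def by (cases "N = 0") (simp_all add: field_simps)

lemma rt_sum:
  assumes "0 < i" "i < N"
  shows "(\<Sum>k<N. (rt N ^ i) ^ k) = 0"
proof -
  have N: "N > 0" using assms by simp
  have ne: "rt N ^ i \<noteq> 1"
  proof
    assume "rt N ^ i = 1"
    then have "exp (\<i> * complex_of_real (real i * (2 * pi / real N))) = 1"
      by (simp add: rt_pow cis_conv_exp)
    then obtain n :: int where n: "real i * (2 * pi / real N) = of_int (2 * n) * pi"
      by (auto simp: exp_eq_1)
    then have "real i = of_int n * real N" using N by (simp add: field_simps)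
    then have "real i = real_of_int (n * int N)" by simp
    then have ii: "int i = n * int N" by linarith
    show False
    proof (cases "n \<le> 0")
      case True
      then have "n * int N \<le> 0" using N by (simp add: mult_nonpos_nonneg)
      then show False using ii assms by simp
    next
      case False
      then have "n * int N \<ge> 1 * int N" using N by (intro mult_right_mono) auto
      then show False using ii assms by linarith
    qed
  qed
  have "(rt N ^ i) ^ N = 1" using rt_pow_pow_N[OF N] .
  then show ?thesis using geometric_sum[OF ne, of N] by simp
qed

lemma cis_small:
  assumes "c > 0"
  shows "\<exists>\<eta>>0. \<forall>\<theta>. \<bar>\<theta>\<bar> < \<eta> \<longrightarrow> cmod (cis \<theta> - 1) < c"
proof -
  have "((\<lambda>x. cis x) \<longlongrightarrow> cis 0) (at 0)"
    by (intro tendsto_intros)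
  then have "continuous (at 0) (\<lambda>x::real. cis x)" by (simp add: isCont_def)
  then obtain \<eta> where "\<eta> > 0" "\<forall>x'. dist x' 0 < \<eta> \<longrightarrow> dist (cis x') (cis 0) < c"
    using assms unfolding continuous_at_eps_delta by blast
  then show ?thesis by (intro exI[of _ \<eta>]) (auto simp: dist_norm)
qed

lemma geo_tele:
  fixes y :: "'a::ring_1"
  shows "(1 - y) * (\<Sum>i<n. y ^ i) = 1 - y ^ n"
proof (induction n)
  case 0 then show ?case by simp
next
  case (Suc n)
  have "(1 - y) * (\<Sum>k<Suc n. y ^ k) = (1 - y) * (\<Sum>k<n. y ^ k) + (1 - y) * y ^ n"
    by (simp add: distrib_left)
  also have "\<dots> = 1 - y ^ Suc n" using Suc.IH by (simp add: algebra_simps)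
  finally show ?case .
qed

lemma scaleR_inv_nat:
  assumes "N > 0" shows "scaleR (1 / real N) (of_nat N :: 'a::real_algebra_1) = 1"
proof -
  have "(of_nat N :: 'a) = real N *\<^sub>R 1" by (metis of_real_def of_real_of_nat_eq)
  then show ?thesis using assms by simp
qed

definition Av :: "'a::complex_banach_algebra_1 \<Rightarrow> nat \<Rightarrow> complex \<Rightarrow> 'a" where
  "Av q N t = scaleR (1 / real N) (\<Sum>k<N. Fq q (rt N ^ k * t))"

lemma cc_power_mult:
  fixes q :: "'a::complex_banach_algebra_1"
  shows "(cc c * q) ^ n = cc (c ^ n) * q ^ n"
  by (simp add: power_mult_comm[OF cc_comm] cc_power)

lemma Av_inv:
  fixes q :: "'a::complex_banach_algebra_1"
  assumes HI: "\<And>t. invertible_el (1 - cc t * q)" and N: "N > 0"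
  shows "Av q N t * (1 - cc (t ^ N) * q ^ N) = 1" "(1 - cc (t ^ N) * q ^ N) * Av q N t = 1"
proof -
  define X where "X = 1 - cc (t ^ N) * q ^ N"
  define c where "c k = rt N ^ k * t" for k
  define S where "S k = (\<Sum>i<N. (cc (c k) * q) ^ i)" for k
  have FX: "Fq q (c k) * X = S k" for k
  proof -
    have "(cc (c k) * q) ^ N = cc (t ^ N) * q ^ N"
      by (simp add: cc_power_mult c_def power_mult_distrib rt_pow_pow_N[OF N])
    then have "X = (1 - cc (c k) * q) * S k"
      by (simp add: X_def S_def geo_tele)
    then have "Fq q (c k) * X = (Fq q (c k) * (1 - cc (c k) * q)) * S k"
      by (simp add: mult.assoc)
    then show ?thesis using Fq_inv[OF HI] by simp
  qed
  have XF: "X * Fq q (c k) = Fq q (c k) * X" for k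
  proof -
    have "Fq q (c k) * q ^ N = q ^ N * Fq q (c k)"
      using power_comm[OF Fq_comm[OF HI, of "c k", symmetric]] by simp
    then have e1: "Fq q (c k) * q ^ N = q ^ N * Fq q (c k)" .
    have "Fq q (c k) * (cc (t ^ N) * q ^ N) = (Fq q (c k) * q ^ N) * cc (t ^ N)"
      by (simp add: cc_comm mult.assoc)
    also have "\<dots> = (q ^ N * Fq q (c k)) * cc (t ^ N)" using e1 by simp
    also have "\<dots> = (cc (t ^ N) * q ^ N) * Fq q (c k)" by (simp add: cc_comm mult.assoc)
    finally have e2: "Fq q (c k) * (cc (t ^ N) * q ^ N) = (cc (t ^ N) * q ^ N) * Fq q (c k)" .
    show ?thesis unfolding X_def left_diff_distrib right_diff_distrib using e2 by simp
  qed
  have sumS: "(\<Sum>k<N. S k) = of_nat N"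
  proof -
    have "(\<Sum>k<N. S k) = (\<Sum>k<N. \<Sum>i<N. cc ((c k) ^ i) * q ^ i)"
      by (simp add: S_def cc_power_mult)
    also have "\<dots> = (\<Sum>i<N. \<Sum>k<N. cc ((c k) ^ i) * q ^ i)"
      by (rule sum.swap)
    also have "\<dots> = (\<Sum>i<N. cc (\<Sum>k<N. (c k) ^ i) * q ^ i)"
      by (simp add: cc_sum sum_distrib_right)
    also have "\<dots> = (\<Sum>i<N. if i = 0 then of_nat N else 0)"
    proof (rule sum.cong)
      fix i assume i: "i \<in> {..<N}"
      have ci_el: "(c k) ^ i = t ^ i * (rt N ^ i) ^ k" for k
      proof -
        have "(c k) ^ i = (rt N ^ k) ^ i * t ^ i" unfolding c_def by (rule power_mult_distrib)
        also have "\<dots> = (rt N ^ i) ^ k * t ^ i" by (metis power_mult mult.commute)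
        also have "\<dots> = t ^ i * (rt N ^ i) ^ k" by (rule mult.commute)
        finally show ?thesis .
      qed
      have ci: "(\<Sum>k<N. (c k) ^ i) = t ^ i * (\<Sum>k<N. (rt N ^ i) ^ k)"
        by (simp only: ci_el sum_distrib_left)
      show "cc (\<Sum>k<N. (c k) ^ i) * q ^ i = (if i = 0 then of_nat N else 0)"
      proof (cases "i = 0")
        case True then show ?thesis by (simp add: cc_of_nat flip: cc_sum)
      next
        case False
        then have "(\<Sum>k<N. (rt N ^ i) ^ k) = 0" using rt_sum i by simp
        then show ?thesis using False ci by simp
      qed
    qed simp
    also have "\<dots> = of_nat N" using N by simp
    finally show ?thesis .
  qed
  have AX: "Av q N t * X = 1"
  proof -
    have "Av q N t * X = scaleR (1 / real N) (\<Sum>k<N. Fq q (c k) * X)"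
      by (simp add: Av_def c_def sum_distrib_right)
    also have "\<dots> = scaleR (1 / real N) (of_nat N)" by (simp add: FX sumS)
    also have "\<dots> = 1" using N by (rule scaleR_inv_nat)
    finally show ?thesis .
  qed
  have Avc: "Av q N t = scaleR (1 / real N) (\<Sum>k<N. Fq q (c k))" by (simp add: Av_def c_def)
  have "X * Av q N t = scaleR (1 / real N) (\<Sum>k<N. X * Fq q (c k))"
    by (simp add: Avc sum_distrib_left)
  also have "\<dots> = scaleR (1 / real N) (\<Sum>k<N. Fq q (c k) * X)"
    by (simp only: XF)
  also have "\<dots> = Av q N t * X"
    by (simp add: Avc sum_distrib_right)
  finally have XA: "X * Av q N t = 1" using AX by simp
  show "Av q N t * (1 - cc (t ^ N) * q ^ N) = 1" "(1 - cc (t ^ N) * q ^ N) * Av q N t = 1"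
    using AX XA by (simp_all add: X_def)
qed

lemma Av_0:
  fixes q :: "'a::complex_banach_algebra_1"
  assumes "N > 0" shows "Av q N 0 = 1"
  using assms by (simp add: Av_def Fq_0 scaleR_inv_nat)

lemma sum_lessThan_add:
  fixes g :: "nat \<Rightarrow> 'b::comm_monoid_add"
  shows "(\<Sum>k<a+b. g k) = (\<Sum>k<a. g k) + (\<Sum>l<b. g (a + l))"
  by (induction b) (simp_all add: add.assoc)

lemma sum_blocks:
  fixes g :: "nat \<Rightarrow> 'b::comm_monoid_add"
  shows "(\<Sum>k<N*M. g k) = (\<Sum>j<N. \<Sum>l<M. g (j*M + l))"
proof (induction N)
  case 0 then show ?case by simp
next
  case (Suc N)
  have "Suc N * M = N * M + M" by simp
  then have "(\<Sum>k<Suc N * M. g k) = (\<Sum>k<N*M. g k) + (\<Sum>l<M. g (N*M + l))"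
    by (simp only: sum_lessThan_add)
  then show ?case using Suc.IH by simp
qed

lemma Av_cmp:
  fixes q :: "'a::complex_banach_algebra_1"
  assumes UC: "\<And>t t'. cmod t \<le> R \<Longrightarrow> cmod t' \<le> R \<Longrightarrow> cmod (t' - t) < d \<Longrightarrow> norm (Fq q t' - Fq q t) < e"
    and N: "N > 0" and M: "M > 0" and t: "cmod t \<le> R"
    and small: "\<And>l. l < M \<Longrightarrow> cmod t * cmod (rt (N*M) ^ l - 1) < d"
  shows "norm (Av q N t - Av q (N*M) t) \<le> e"
proof -
  define D where "D j l = Fq q (rt N ^ j * t) - Fq q (rt N ^ j * (rt (N*M) ^ l * t))" for j l
  have rj: "rt (N*M) ^ (j*M) = rt N ^ j" for j
    by (metis power_mult mult.commute rt_NM[OF M])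
  have pt: "rt (N*M) ^ (j*M + l) * t = rt N ^ j * (rt (N*M) ^ l * t)" for j l
    by (simp add: power_add rj mult.assoc)
  have A2: "Av q (N*M) t = scaleR (1 / real (N*M)) (\<Sum>j<N. \<Sum>l<M. Fq q (rt N ^ j * (rt (N*M) ^ l * t)))"
    unfolding Av_def sum_blocks pt ..
  have A1: "Av q N t = scaleR (1 / real (N*M)) (\<Sum>j<N. \<Sum>l<M. Fq q (rt N ^ j * t))"
  proof -
    have "(\<Sum>j<N. \<Sum>l<M. Fq q (rt N ^ j * t)) = real M *\<^sub>R (\<Sum>j<N. Fq q (rt N ^ j * t))"
      by (simp add: sum_constant_scaleR scaleR_sum_right scaleR_conv_of_real sum_distrib_left)
    moreover have "1 / real (N*M) * real M = 1 / real N" using M by simp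
    ultimately show ?thesis by (simp add: Av_def)
  qed
  have diff: "Av q N t - Av q (N*M) t = scaleR (1 / real (N*M)) (\<Sum>j<N. \<Sum>l<M. D j l)"
    unfolding A1 A2 D_def by (simp add: sum_subtractf scaleR_diff_right)
  have Db: "norm (D j l) < e" if l: "l < M" for j l
  proof -
    let ?p = "rt N ^ j * t" and ?p' = "rt N ^ j * (rt (N*M) ^ l * t)"
    have c1: "cmod ?p \<le> R" using t by (simp add: norm_mult)
    have c2: "cmod ?p' \<le> R" using t by (simp add: norm_mult)
    have "?p' - ?p = rt N ^ j * ((rt (N*M) ^ l - 1) * t)" by (simp add: algebra_simps)
    then have "cmod (?p' - ?p) = cmod t * cmod (rt (N*M) ^ l - 1)" by (simp add: norm_mult)
    then have c3: "cmod (?p' - ?p) < d" using small[OF l] by simp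
    have "norm (Fq q ?p' - Fq q ?p) < e" by (rule UC[OF c1 c2 c3])
    then show ?thesis by (simp add: D_def norm_minus_commute)
  qed
  have "norm (\<Sum>j<N. \<Sum>l<M. D j l) \<le> (\<Sum>j<N. norm (\<Sum>l<M. D j l))" by (rule norm_sum)
  also have "\<dots> \<le> (\<Sum>j<N. \<Sum>l<M. norm (D j l))" by (intro sum_mono norm_sum)
  also have "\<dots> \<le> (\<Sum>j<N. \<Sum>l<M. e)" by (intro sum_mono) (auto intro: less_imp_le Db)
  also have "\<dots> = real N * real M * e" by simp
  finally have S: "norm (\<Sum>j<N. \<Sum>l<M. D j l) \<le> real N * real M * e" .
  have "norm (Av q N t - Av q (N*M) t) = (1 / real (N*M)) * norm (\<Sum>j<N. \<Sum>l<M. D j l)"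
    unfolding diff by simp
  also have "\<dots> \<le> (1 / real (N*M)) * (real N * real M * e)"
    using S by (intro mult_left_mono) auto
  also have "\<dots> = e" using N M by simp
  finally show ?thesis .
qed

lemma Av_eqc:
  fixes q :: "'a::complex_banach_algebra_1"
  assumes UC: "\<And>t t'. cmod t \<le> R \<Longrightarrow> cmod t' \<le> R \<Longrightarrow> cmod (t' - t) < d \<Longrightarrow> norm (Fq q t' - Fq q t) < e"
    and N: "N > 0" and t: "cmod t \<le> R" and t': "cmod t' \<le> R" and tt: "cmod (t' - t) < d"
  shows "norm (Av q N t' - Av q N t) \<le> e"
proof -
  define D where "D k = Fq q (rt N ^ k * t') - Fq q (rt N ^ k * t)" for k
  have diff: "Av q N t' - Av q N t = scaleR (1 / real N) (\<Sum>k<N. D k)"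
    unfolding Av_def D_def by (simp add: sum_subtractf scaleR_diff_right)
  have Db: "norm (D k) \<le> e" for k
  proof -
    have c1: "cmod (rt N ^ k * t) \<le> R" using t by (simp add: norm_mult)
    have c2: "cmod (rt N ^ k * t') \<le> R" using t' by (simp add: norm_mult)
    have "rt N ^ k * t' - rt N ^ k * t = rt N ^ k * (t' - t)" by (simp add: algebra_simps)
    then have c3: "cmod (rt N ^ k * t' - rt N ^ k * t) < d" using tt by (simp add: norm_mult)
    show ?thesis using UC[OF c1 c2 c3] by (simp add: D_def)
  qed
  have "norm (\<Sum>k<N. D k) \<le> (\<Sum>k<N. norm (D k))" by (rule norm_sum)
  also have "\<dots> \<le> (\<Sum>k<N. e)" by (intro sum_mono Db)
  also have "\<dots> = real N * e" by simp
  finally have S: "norm (\<Sum>k<N. D k) \<le> real N * e" .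
  have "norm (Av q N t' - Av q N t) = (1 / real N) * norm (\<Sum>k<N. D k)"
    unfolding diff by simp
  also have "\<dots> \<le> (1 / real N) * (real N * e)"
    using S by (intro mult_left_mono) auto
  also have "\<dots> = e" using N by simp
  finally show ?thesis .
qed

lemma inv_close:
  fixes A y :: "'a::real_normed_algebra_1"
  assumes A: "A * (1 - y) = 1" and Aa: "norm (A - 1) \<le> a" and a: "a < 1"
  shows "norm y \<le> a / (1 - a)"
proof -
  have "(A - 1) * (1 - y) = A * (1 - y) - (1 - y)" by (simp add: left_diff_distrib)
  then have "y = (A - 1) * (1 - y)" using A by simp
  then have "norm y \<le> norm (A - 1) * norm (1 - y)" by (metis norm_mult_ineq)
  also have "\<dots> \<le> a * (1 + norm y)"
  proof (rule mult_mono[OF Aa])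
    show "norm (1 - y) \<le> 1 + norm y" using norm_triangle_ineq4[of 1 y] by simp
    show "0 \<le> a" using Aa norm_ge_zero order_trans by blast
  qed simp
  finally have "norm y \<le> a * (1 + norm y)" .
  then show ?thesis using a by (simp add: le_divide_eq algebra_simps)
qed

lemma inv_near1:
  fixes B z :: "'a::real_normed_algebra_1"
  assumes B: "B * (1 - z) = 1" and z: "norm z < 1"
  shows "norm (B - 1) \<le> norm z / (1 - norm z)"
proof -
  have "B * (1 - z) = B - B * z" by (simp add: right_diff_distrib)
  then have "B - 1 = B * z" using B by (simp add: algebra_simps)
  then have "norm (B - 1) \<le> norm B * norm z" by (metis norm_mult_ineq)
  also have "\<dots> \<le> (norm (B - 1) + 1) * norm z"
  proof (rule mult_right_mono)
    show "norm B \<le> norm (B - 1) + 1" using norm_triangle_ineq[of "B - 1" 1] by simp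
  qed simp
  finally have "norm (B - 1) \<le> (norm (B - 1) + 1) * norm z" .
  then show ?thesis using z by (simp add: le_divide_eq algebra_simps)
qed

lemma improve:
  fixes A1 A3 y :: "'a::real_normed_algebra_1"
  assumes A1: "A1 * (1 - y) = 1" and A3: "A3 * (1 - y ^ 3) = 1"
    and n1: "norm (A1 - 1) \<le> 3/16" and n13: "norm (A1 - A3) \<le> 1/16"
  shows "norm (A1 - 1) \<le> 1/8"
proof -
  have "norm y \<le> (3/16) / (1 - 3/16)" by (rule inv_close[OF A1 n1]) simp
  then have ny: "norm y \<le> 3/13" by simp
  have "norm (y ^ 3) \<le> norm y ^ 3" by (rule norm_power_ineq)
  also have "\<dots> \<le> (3/13) ^ 3" using ny by (intro power_mono) simp_all
  also have "(3/13::real) ^ 3 = 27/2197" by (simp add: power_divide)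
  finally have n3: "norm (y ^ 3) \<le> 27/2197" .
  then have lt: "norm (y ^ 3) < 1" by simp
  have pos: "1 - norm (y ^ 3) > 0" using lt by simp
  have "norm (A3 - 1) \<le> norm (y ^ 3) / (1 - norm (y ^ 3))" by (rule inv_near1[OF A3 lt])
  also have "\<dots> \<le> 1/50" using n3 pos by (simp add: pos_divide_le_eq)
  finally have n31: "norm (A3 - 1) \<le> 1/50" .
  have "norm (A1 - 1) \<le> norm (A1 - A3) + norm (A3 - 1)"
    using norm_triangle_ineq[of "A1 - A3" "A3 - 1"] by simp
  then show ?thesis using n13 n31 by simp
qed

lemma key_bound:
  fixes q :: "'a::complex_banach_algebra_1"
  assumes HI: "\<And>t. invertible_el (1 - cc t * q)" and R: "R > 0"
  shows "\<exists>C. \<forall>k. R ^ k * norm (q ^ k) \<le> C"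
proof -
  obtain d where d: "d > 0" and UC0: "\<forall>t t'. cmod t \<le> R \<longrightarrow> cmod t' \<le> R \<longrightarrow> cmod (t' - t) < d \<longrightarrow>
      norm (Fq q t' - Fq q t) < 1/16"
    using Fq_unifcont[OF HI, of "1/16" R] by auto
  have UC: "\<And>t t'. cmod t \<le> R \<Longrightarrow> cmod t' \<le> R \<Longrightarrow> cmod (t' - t) < d \<Longrightarrow> norm (Fq q t' - Fq q t) < 1/16"
    using UC0 by blast
  have dR: "d / R > 0" using d R by simp
  obtain \<eta> where eta: "\<eta> > 0" and eta2: "\<forall>\<theta>. \<bar>\<theta>\<bar> < \<eta> \<longrightarrow> cmod (cis \<theta> - 1) < d / R"
    using cis_small[OF dR] by auto
  obtain N0 :: nat where N0: "2 * pi / \<eta> < real N0" using reals_Archimedean2 by blast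
  have N0pos: "N0 > 0"
  proof -
    have "2 * pi / \<eta> > 0" using eta by simp
    then show ?thesis using N0 by (cases N0) auto
  qed
  have piN0: "2 * pi / real N0 < \<eta>"
    using N0 eta N0pos by (simp add: field_simps)
  obtain L :: nat where L: "R / d < real L" using reals_Archimedean2 by blast
  have Lpos: "L > 0"
  proof -
    have "R / d > 0" using R d by simp
    then show ?thesis using L by (cases L) auto
  qed
  have RL: "R / real L < d" using L d Lpos by (simp add: field_simps)
  have bigN: "R ^ N * norm (q ^ N) \<le> 1" if NN0: "N \<ge> N0" for N
  proof -
    have Npos: "N > 0" using NN0 N0pos by simp
    have small: "cmod t * cmod (rt (N*M) ^ l - 1) < d"
      if M: "M > 0" and l: "l < M" and t: "cmod t \<le> R" for M l t
    proof -
      define \<theta> where "\<theta> = real l * (2 * pi / real (N*M))"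
      have th0: "\<theta> \<ge> 0" by (simp add: \<theta>_def)
      have "\<theta> = (real l / real M) * (2 * pi / real N)" using M Npos by (simp add: \<theta>_def field_simps)
      also have "\<dots> < 1 * (2 * pi / real N)"
        using l Npos by (intro mult_strict_right_mono) simp_all
      also have "\<dots> \<le> 2 * pi / real N0"
        using NN0 N0pos by (simp add: divide_left_mono)
      finally have "\<theta> < \<eta>" using piN0 by simp
      then have "cmod (cis \<theta> - 1) < d / R" using eta2 th0 by simp
      moreover have "rt (N*M) ^ l = cis \<theta>" by (simp add: rt_pow \<theta>_def)
      ultimately have x: "cmod (rt (N*M) ^ l - 1) < d / R" by simp
      have "cmod t * cmod (rt (N*M) ^ l - 1) \<le> R * cmod (rt (N*M) ^ l - 1)"
        using t by (intro mult_right_mono) simp_all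
      also have "\<dots> < R * (d / R)" using mult_strict_left_mono[OF x R] .
      also have "\<dots> = d" using R by simp
      finally show ?thesis .
    qed
    define tj where "tj j = complex_of_real (real j * R / real L)" for j
    have ctj: "cmod (tj j) \<le> R" if "j \<le> L" for j
    proof -
      have "cmod (tj j) = \<bar>real j * R / real L\<bar>" unfolding tj_def by (rule norm_of_real)
      also have "\<dots> = real j * R / real L" using R by simp
      also have "\<dots> \<le> real L * R / real L"
        using that R by (intro divide_right_mono mult_right_mono) simp_all
      also have "\<dots> = R" using Lpos by simp
      finally show ?thesis .
    qed
    have dtj: "cmod (tj (Suc j) - tj j) < d" for j
    proof -
      have "real (Suc j) * R / real L - real j * R / real L = R / real L"
        using Lpos by (simp add: field_simps)
      then have "tj (Suc j) - tj j = complex_of_real (R / real L)"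
        unfolding tj_def by (metis of_real_diff)
      then have "cmod (tj (Suc j) - tj j) = \<bar>R / real L\<bar>" by (simp only: norm_of_real)
      then show ?thesis using RL R by simp
    qed
    have ind: "j \<le> L \<longrightarrow> norm (Av q N (tj j) - 1) \<le> 1/8" for j
    proof (induction j)
      case 0
      show ?case by (simp add: tj_def Av_0[OF Npos])
    next
      case (Suc j)
      show ?case
      proof
        assume jL: "Suc j \<le> L"
        then have IH: "norm (Av q N (tj j) - 1) \<le> 1/8" using Suc.IH by simp
        let ?t = "tj (Suc j)"
        have c1: "cmod (tj j) \<le> R" using jL ctj by simp
        have c2: "cmod ?t \<le> R" using jL ctj by simp
        have "norm (Av q N ?t - Av q N (tj j)) \<le> 1/16"
          by (rule Av_eqc[OF UC Npos c1 c2 dtj])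
        then have n1: "norm (Av q N ?t - 1) \<le> 3/16"
          using IH norm_triangle_ineq[of "Av q N ?t - Av q N (tj j)" "Av q N (tj j) - 1"] by simp
        have n13: "norm (Av q N ?t - Av q (N*3) ?t) \<le> 1/16"
          by (rule Av_cmp[OF UC Npos _ c2]) (use small c2 in auto)
        define y where "y = cc (?t ^ N) * q ^ N"
        have A1: "Av q N ?t * (1 - y) = 1" using Av_inv(1)[OF HI Npos] by (simp add: y_def)
        have "y ^ 3 = cc ((?t ^ N) ^ 3) * (q ^ N) ^ 3" by (simp add: y_def cc_power_mult)
        also have "\<dots> = cc (?t ^ (N*3)) * q ^ (N*3)" by (simp add: power_mult)
        finally have y3: "y ^ 3 = cc (?t ^ (N*3)) * q ^ (N*3)" .
        have A3: "Av q (N*3) ?t * (1 - y ^ 3) = 1"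
          using Av_inv(1)[OF HI, of "N*3" ?t] Npos by (simp add: y3)
        show "norm (Av q N ?t - 1) \<le> 1/8" by (rule improve[OF A1 A3 n1 n13])
      qed
    qed
    have "tj L = complex_of_real R" using Lpos by (simp add: tj_def)
    then have AL: "norm (Av q N (complex_of_real R) - 1) \<le> 1/8" using ind[of L] by simp
    define y where "y = cc (complex_of_real R ^ N) * q ^ N"
    have A1: "Av q N (complex_of_real R) * (1 - y) = 1" using Av_inv(1)[OF HI Npos] by (simp add: y_def)
    have "norm y \<le> (1/8) / (1 - 1/8)" by (rule inv_close[OF A1 AL]) simp
    moreover have "norm y = R ^ N * norm (q ^ N)"
      using R by (simp add: y_def norm_cc_mult norm_power)
    ultimately show ?thesis by simp
  qed
  define C where "C = 1 + (\<Sum>k<N0. R ^ k * norm (q ^ k))"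
  show ?thesis
  proof (intro exI allI)
    fix k
    show "R ^ k * norm (q ^ k) \<le> C"
    proof (cases "k < N0")
      case True
      have "R ^ k * norm (q ^ k) \<le> (\<Sum>k<N0. R ^ k * norm (q ^ k))"
        by (rule member_le_sum) (use True R in auto)
      then show ?thesis by (simp add: C_def)
    next
      case False
      have "(\<Sum>k<N0. R ^ k * norm (q ^ k)) \<ge> 0" by (intro sum_nonneg) (use R in auto)
      then show ?thesis using bigN[of k] False by (simp add: C_def)
    qed
  qed
qed

lemma qnil_imp_SQN:
  fixes q :: "'a::complex_banach_algebra_1"
  assumes "quasinilpotent q" shows "SQN q"
proof -
  have H: "invertible_el (cc z - q)" if "z \<noteq> 0" for z
    using assms that unfolding quasinilpotent_def spectrum_cc by auto
  have HI: "invertible_el (1 - cc t * q)" for t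
  proof (cases "t = 0")
    case True then show ?thesis by (simp add: invertible_el_def)
  next
    case False
    have "cc t * (cc (1/t) - q) = 1 - cc t * q"
      using False by (simp add: right_diff_distrib flip: cc_mult)
    then show ?thesis using inv_mult[OF cc_invertible[OF False] H[of "1/t"]] False by simp
  qed
  show ?thesis unfolding SQN_def using key_bound[OF HI] by blast
qed

lemma qnil_iff_SQN:
  fixes q :: "'a::complex_banach_algebra_1"
  shows "quasinilpotent q \<longleftrightarrow> SQN q"
  using qnil_imp_SQN SQN_imp_qnil by blast

lemma gb_half_bound: "\<bar>(-1/2::real) gchoose k\<bar> \<le> 1"
proof (induction k)
  case 0 show ?case by simp
next
  case (Suc k)
  have e: "(-1/2::real) gchoose Suc k = ((-1/2) - real k) / real (Suc k) * ((-1/2) gchoose k)"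
    using gbinomial_mult_1[of "-1/2::real" k] by (simp add: field_simps)
  have a1: "\<bar>(-1/2) - real k\<bar> = real k + 1/2" by simp
  have r: "\<bar>((-1/2) - real k) / real (Suc k)\<bar> \<le> 1"
    unfolding abs_divide a1 by simp
  have "\<bar>(-1/2::real) gchoose Suc k\<bar> = \<bar>((-1/2) - real k) / real (Suc k)\<bar> * \<bar>(-1/2) gchoose k\<bar>"
    unfolding e abs_mult ..
  also have "\<dots> \<le> 1 * 1" using r Suc.IH by (intro mult_mono) simp_all
  finally show ?case by simp
qed

lemma gb_conv: "(\<Sum>i\<le>k. ((-1/2::real) gchoose i) * ((-1/2) gchoose (k - i))) = (-1) ^ k"
proof -
  have "(\<Sum>i\<le>k. ((-1/2::real) gchoose i) * ((-1/2) gchoose (k - i))) = (-1/2 + -1/2) gchoose k"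
    unfolding atMost_atLeast0 by (rule gbinomial_Vandermonde)
  also have "\<dots> = (-1) gchoose k" by simp
  also have "\<dots> = (-1) ^ k * ((of_nat k - (-1) - 1) gchoose k)" by (rule gbinomial_negated_upper)
  also have "(of_nat k - (-1) - 1 :: real) gchoose k = of_nat (k choose k)"
    by (simp flip: binomial_gbinomial)
  finally show ?thesis by simp
qed

lemma sqrt_series:
  fixes r :: "'a::{real_normed_algebra_1,banach}"
  assumes "SQN r"
  shows "\<exists>h. (1 + r * h) * (1 + r * h) * (1 + 4 * r) = 1 \<and> (\<forall>y. y * r = r * y \<longrightarrow> y * h = h * y)"
proof -
  define c where "c k = ((-1/2::real) gchoose k) * 4 ^ k" for k
  have cb: "\<bar>c k\<bar> \<le> 4 ^ k" for k
    using gb_half_bound[of k] by (simp add: c_def abs_mult)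
  have eight: "(8::real) > 0" by simp
  obtain C where C: "\<And>k. 8 ^ k * norm (r ^ k) \<le> C" using SQN_D[OF assms eight] by blast
  have key: "4 ^ k * norm (r ^ k) \<le> C * (1/2) ^ k" for k
  proof -
    have "(8::real) ^ k = 4 ^ k * 2 ^ k" by (simp flip: power_mult_distrib)
    then have "4 ^ k * norm (r ^ k) * 2 ^ k \<le> C" using C[of k] by (simp add: mult_ac)
    then show ?thesis by (simp add: power_one_over pos_le_divide_eq)
  qed
  have gsum: "summable (\<lambda>k. C * (1/2::real) ^ k)" by (intro summable_mult summable_geometric) simp
  have gsum4: "summable (\<lambda>k. 4 * C * (1/2::real) ^ k)" by (intro summable_mult summable_geometric) simp
  define a where "a k = c k *\<^sub>R r ^ k" for k
  have na: "norm (a k) \<le> C * (1/2) ^ k" for k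
  proof -
    have "norm (a k) = \<bar>c k\<bar> * norm (r ^ k)" by (simp add: a_def)
    also have "\<dots> \<le> 4 ^ k * norm (r ^ k)" using cb by (intro mult_right_mono) simp_all
    finally show ?thesis using key[of k] by simp
  qed
  have sa: "summable (\<lambda>k. norm (a k))"
    by (rule summable_comparison_test'[OF gsum, where N=0]) (use na in simp)
  define b where "b k = c (Suc k) *\<^sub>R r ^ k" for k
  have nb: "norm (b k) \<le> 4 * C * (1/2) ^ k" for k
  proof -
    have "norm (b k) = \<bar>c (Suc k)\<bar> * norm (r ^ k)" by (simp add: b_def)
    also have "\<dots> \<le> 4 * 4 ^ k * norm (r ^ k)" using cb[of "Suc k"] by (intro mult_right_mono) simp_all
    also have "\<dots> \<le> 4 * (C * (1/2) ^ k)" using key[of k] by simp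
    finally show ?thesis by simp
  qed
  have sb: "summable (\<lambda>k. norm (b k))"
    by (rule summable_comparison_test'[OF gsum4, where N=0]) (use nb in simp)
  have sb': "summable b" using sb by (rule summable_norm_cancel)
  have sa': "summable a" using sa by (rule summable_norm_cancel)
  define h where "h = suminf b"
  have s_eq: "suminf a = 1 + r * h"
  proof -
    have "(\<Sum>k. a (Suc k)) = suminf a - a 0" by (rule suminf_split_head[OF sa'])
    moreover have "a 0 = 1" by (simp add: a_def c_def)
    moreover have "(\<lambda>k. a (Suc k)) = (\<lambda>k. r * b k)"
      by (rule ext) (simp add: a_def b_def)
    moreover have "(\<Sum>k. r * b k) = r * h" unfolding h_def by (rule suminf_mult[OF sb'])
    ultimately show ?thesis by (simp add: algebra_simps)
  qed
  define w where "w = (-4::real) *\<^sub>R r"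
  have wk: "w ^ k = ((-4::real) ^ k) *\<^sub>R r ^ k" for k
    by (induction k) (simp_all add: w_def)
  have nw: "norm (w ^ k) \<le> C * (1/2) ^ k" for k
    using key[of k] by (simp add: wk)
  have sw: "summable (\<lambda>k. norm (w ^ k))"
    by (rule summable_comparison_test'[OF gsum, where N=0]) (use nw in simp)
  have prod: "a i * a (k - i) = (c i * c (k - i)) *\<^sub>R r ^ k" if "i \<le> k" for i k
  proof -
    have "r ^ i * r ^ (k - i) = r ^ k" using that by (simp flip: power_add)
    then show ?thesis by (simp add: a_def)
  qed
  have csum: "(\<Sum>i\<le>k. c i * c (k - i)) = (-4) ^ k" for k
  proof -
    have "(\<Sum>i\<le>k. c i * c (k - i)) = (\<Sum>i\<le>k. (((-1/2::real) gchoose i) * ((-1/2) gchoose (k - i))) * 4 ^ k)"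
    proof (rule sum.cong)
      fix i assume "i \<in> {..k}"
      then have "(4::real) ^ i * 4 ^ (k - i) = 4 ^ k" by (simp flip: power_add)
      then show "c i * c (k - i) = (((-1/2::real) gchoose i) * ((-1/2) gchoose (k - i))) * 4 ^ k"
        by (simp add: c_def mult_ac)
    qed simp
    also have "\<dots> = (-1) ^ k * 4 ^ k" using gb_conv[of k] by (simp flip: sum_distrib_right)
    also have "\<dots> = (-4) ^ k" by (simp flip: power_mult_distrib)
    finally show ?thesis .
  qed
  have "suminf a * suminf a = (\<Sum>k. \<Sum>i\<le>k. a i * a (k - i))" by (rule Cauchy_product[OF sa sa])
  also have "\<dots> = (\<Sum>k. w ^ k)"
  proof (rule suminf_cong)
    fix k
    have "(\<Sum>i\<le>k. a i * a (k - i)) = (\<Sum>i\<le>k. (c i * c (k - i)) *\<^sub>R r ^ k)"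
      by (rule sum.cong) (simp_all add: prod)
    also have "\<dots> = (\<Sum>i\<le>k. c i * c (k - i)) *\<^sub>R r ^ k" by (simp add: scaleR_sum_left)
    also have "\<dots> = w ^ k" by (simp add: csum wk)
    finally show "(\<Sum>i\<le>k. a i * a (k - i)) = w ^ k" .
  qed
  finally have ss: "suminf a * suminf a = (\<Sum>k. w ^ k)" .
  have w1: "1 - w = 1 + 4 * r" by (simp add: w_def scaleR_conv_of_real)
  have ss2: "(1 + r * h) * (1 + r * h) = (\<Sum>k. w ^ k)" using ss s_eq by simp
  have "(1 + r * h) * (1 + r * h) * (1 + 4 * r) = (\<Sum>k. w ^ k) * (1 - w)"
    unfolding w1 ss2 ..
  then have main: "(1 + r * h) * (1 + r * h) * (1 + 4 * r) = 1"
    using neumann(2)[OF sw] by simp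
  have comm: "y * h = h * y" if y: "y * r = r * y" for y
  proof -
    have "y * b k = b k * y" for k
      using power_comm[OF y[symmetric], of k] by (simp add: b_def)
    then have "(\<Sum>k. y * b k) = (\<Sum>k. b k * y)" by simp
    then show ?thesis unfolding h_def suminf_mult[OF sb', symmetric] suminf_mult2[OF sb'] .
  qed
  show ?thesis using main comm by blast
qed

lemma dir12:
  fixes a x :: "'a::complex_banach_algebra_1"
  assumes xax: "x * a * x = x" and ax: "a * x = x * a" and b: "SQN (a - a ^ (n + 2) * x)"
  shows "SQN (a - a ^ (n + 1))"
proof -
  define p where "p = a * x"
  define an where "an = a ^ n"
  have r3: "p * p = p"
  proof -
    have "p * p = a * (x * a * x)" by (simp add: p_def mult.assoc)
    then show ?thesis using xax by (simp add: p_def)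
  qed
  have r1: "p * a = a * p"
  proof -
    have "p * a = a * (x * a)" by (simp add: p_def mult.assoc)
    also have "\<dots> = a * (a * x)" by (simp add: ax)
    finally show ?thesis by (simp add: p_def)
  qed
  have r2: "p * (a * y) = a * (p * y)" for y by (simp add: mult.assoc[symmetric] r1)
  have r4: "p * (p * y) = p * y" for y by (simp add: mult.assoc[symmetric] r3)
  have r5: "an * a = a * an" by (simp add: an_def power_commutes)
  have r6: "an * (a * y) = a * (an * y)" for y by (simp add: mult.assoc[symmetric] r5)
  have r7: "p * an = an * p" unfolding an_def by (rule power_comm[OF r1[symmetric], symmetric])
  have r8: "p * (an * y) = an * (p * y)" for y by (simp add: mult.assoc[symmetric] r7)
  note R = r1 r2 r3 r4 r5 r6 r7 r8
  have bx: "a ^ (n + 2) * x = a * (an * p)"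
  proof -
    have e: "n + 2 = Suc (Suc n)" by simp
    have "a ^ (n + 2) * x = (a ^ Suc n * a) * x" by (simp only: e power_Suc2)
    also have "\<dots> = (a * an) * p" by (simp add: an_def p_def mult.assoc)
    finally show ?thesis by (simp add: mult.assoc)
  qed
  define B where "B = a - a ^ (n + 2) * x"
  have B: "B = a - a * (an * p)" by (simp only: B_def bx)
  define v where "v = a * (1 - p)"
  define q where "q = a - a * an"
  have qe: "a - a ^ (n + 1) = q" by (simp add: q_def an_def)
  have B1: "B * (1 - p) = v" by (simp add: B v_def algebra_simps R)
  have B1c: "B * (1 - p) = (1 - p) * B" by (simp add: B algebra_simps R)
  have Bp: "B * p = q * p" by (simp add: B q_def algebra_simps R)
  have Bpc: "B * p = p * B" by (simp add: B algebra_simps R)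
  have SB: "SQN B" using b by (simp add: B_def)
  have Sv: "SQN v" using SQN_mult_comm[OF SB B1c] B1 by simp
  have Sqp: "SQN (q * p)" using SQN_mult_comm[OF SB Bpc] Bp by simp
  have q1: "q * (1 - p) = v * (1 - an)" by (simp add: q_def v_def algebra_simps R)
  have vc: "v * (1 - an) = (1 - an) * v" by (simp add: v_def algebra_simps R)
  have Sq1: "SQN (q * (1 - p))" using SQN_mult_comm[OF Sv vc] q1 by simp
  have o1: "q * (1 - p) * (q * p) = 0" by (simp add: q_def algebra_simps R)
  have o2: "q * p * (q * (1 - p)) = 0" by (simp add: q_def algebra_simps R)
  have "q = q * (1 - p) + q * p" by (simp add: algebra_simps)
  then have "SQN q" using SQN_add_orth[OF Sq1 Sqp o1 o2] by simp
  then show ?thesis using qe by simp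
qed

lemma dir32_aux:
  fixes a :: "'a::complex_banach_algebra_1"
  assumes m: "m \<ge> 1" and S: "SQN (a ^ m - a ^ (m + k))"
  shows "SQN (a - a ^ (k + 1))"
proof -
  define c where "c = a - a ^ (k + 1)"
  define ak where "ak = a ^ k"
  define am where "am = a ^ (m - 1)"
  have c_eq: "c = a * (1 - ak)" by (simp add: c_def ak_def algebra_simps)
  have akc: "ak * a = a * ak" by (simp add: ak_def power_commutes)
  have comm: "a * (1 - ak) = (1 - ak) * a" by (simp add: algebra_simps akc)
  have amA: "am * a = a ^ m" using m by (simp add: am_def flip: power_Suc2)
  have e1: "a ^ m - a ^ (m + k) = am * c"
  proof -
    have "am * c = am * a - (am * a) * ak" by (simp add: c_eq algebra_simps)
    also have "\<dots> = a ^ m - a ^ m * a ^ k" by (simp add: amA ak_def)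
    finally show ?thesis by (simp add: power_add)
  qed
  have cm: "c ^ m = (am * c) * (1 - ak) ^ (m - 1)"
  proof -
    have "c ^ m = a ^ m * (1 - ak) ^ m" unfolding c_eq by (rule power_mult_comm[OF comm])
    also have "(1 - ak) ^ m = (1 - ak) * (1 - ak) ^ (m - 1)" using m by (simp flip: power_Suc)
    also have "a ^ m * ((1 - ak) * (1 - ak) ^ (m - 1)) = (am * c) * (1 - ak) ^ (m - 1)"
      by (simp add: c_eq mult.assoc flip: amA)
    finally show ?thesis .
  qed
  have y1: "(1 - ak) ^ (m - 1) * a = a * (1 - ak) ^ (m - 1)"
    by (rule power_comm[OF comm[symmetric]])
  have y2: "(1 - ak) ^ (m - 1) * a ^ j = a ^ j * (1 - ak) ^ (m - 1)" for j
    by (rule power_comm[OF y1[symmetric], symmetric])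
  have cc1: "(am * c) * (1 - ak) ^ (m - 1) = (1 - ak) ^ (m - 1) * (am * c)"
    unfolding e1[symmetric] by (simp only: left_diff_distrib right_diff_distrib y2)
  have "SQN (am * c)" using S e1 by simp
  then have "SQN (c ^ m)" using SQN_mult_comm[OF _ cc1] cm by simp
  moreover have "m > 0" using m by simp
  ultimately have "SQN c" by (rule SQN_power_imp)
  then show ?thesis by (simp add: c_def)
qed

lemma dir32:
  fixes a :: "'a::complex_banach_algebra_1"
  assumes m: "m \<ge> 1" and n: "n \<ge> 1" and mn: "m \<noteq> n" and S: "SQN (a ^ m - a ^ n)"
  shows "\<exists>k. k \<ge> 1 \<and> SQN (a - a ^ (k + 1))"
proof (cases "m < n")
  case True
  then have "m + (n - m) = n" by simp
  then have "SQN (a ^ m - a ^ (m + (n - m)))" using S by simp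
  then have "SQN (a - a ^ ((n - m) + 1))" by (rule dir32_aux[OF m])
  then show ?thesis using True by (intro exI[of _ "n - m"]) simp
next
  case False
  then have nm: "n < m" using mn by simp
  have "SQN (a ^ n - a ^ m)" using SQN_minus[OF S] by simp
  moreover have "n + (m - n) = m" using nm by simp
  ultimately have "SQN (a ^ n - a ^ (n + (m - n)))" by simp
  then have "SQN (a - a ^ ((m - n) + 1))" by (rule dir32_aux[OF n])
  then show ?thesis using nm by (intro exI[of _ "m - n"]) simp
qed

lemma idem_pow:
  fixes e :: "'a::ring_1"
  assumes "e * e = e" "k > 0" shows "e ^ k = e"
  using assms(2)
proof (induction k)
  case 0 then show ?case by simp
next
  case (Suc k)
  show ?case
  proof (cases "k = 0")
    case True then show ?thesis by simp
  next
    case False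
    then have ek: "e ^ k = e" using Suc.IH by simp
    have "e ^ Suc k = e ^ k * e" by (rule power_Suc2)
    then show ?thesis using assms(1) ek by simp
  qed
qed

lemma four_mult: "(4::'a::ring_1) * r = r + r + r + r"
proof -
  have "(4::'a) * r = (1 + 1 + 1 + 1) * r" by simp
  also have "\<dots> = r + r + r + r" by (simp only: distrib_right mult_1_left)
  finally show ?thesis .
qed

lemma dir21:
  fixes a :: "'a::complex_banach_algebra_1"
  assumes n: "n \<ge> 1" and Sq: "SQN (a - a ^ (n + 1))"
  shows "gpi_Hirano_invertible a"
proof -
  define an where "an = a ^ n"
  define am where "am = a ^ (n - 1)"
  define q where "q = a - a * an"
  have qe: "a - a ^ (n + 1) = q" by (simp add: q_def an_def)
  have SQ: "SQN q" using Sq qe by simp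
  have nn: "Suc (n - 1) = n" using n by simp
  have an_S: "an = a ^ Suc (n - 1)" by (simp only: an_def nn)
  have ama: "am * a = an" unfolding an_S am_def by (rule power_Suc2[symmetric])
  have aam: "a * am = an" unfolding an_S am_def by (rule power_Suc[symmetric])
  have c1: "an * a = a * an" by (simp add: an_def power_commutes)
  have c2: "am * a = a * am" using ama aam by simp
  have c3: "am * an = an * am"
  proof -
    have "am * an = (am * a) * am" by (simp add: aam[symmetric] mult.assoc)
    then show ?thesis by (simp add: ama)
  qed
  define r where "r = an * an - an"
  have amq: "am * q = an - an * an"
  proof -
    have "am * q = am * a - (am * a) * an" by (simp add: q_def algebra_simps mult.assoc)
    then show ?thesis by (simp add: ama)
  qed
  have r_eq: "r = - (am * q)" by (simp add: amq r_def)
  have c1': "an * (a * z) = a * (an * z)" for z by (simp add: mult.assoc[symmetric] c1)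
  have c2': "am * (a * z) = a * (am * z)" for z by (simp add: mult.assoc[symmetric] c2)
  have c3': "am * (an * z) = an * (am * z)" for z by (simp add: mult.assoc[symmetric] c3)
  have qam: "q * am = am * q"
    by (simp add: q_def algebra_simps c2 c2' c3 c3')
  have Sr: "SQN r" unfolding r_eq by (intro SQN_minus SQN_mult_comm'[OF SQ qam])
  obtain h where h1: "(1 + r * h) * (1 + r * h) * (1 + 4 * r) = 1"
    and hc: "\<And>y. y * r = r * y \<Longrightarrow> y * h = h * y"
    using sqrt_series[OF Sr] by blast
  have ar: "a * r = r * a" by (simp add: r_def algebra_simps c1 c1')
  have anr: "an * r = r * an" by (simp add: r_def algebra_simps)
  have amr: "am * r = r * am" by (simp add: r_def algebra_simps c3 c3')
  have ha: "a * h = h * a" using hc[OF ar] .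
  have hn: "an * h = h * an" using hc[OF anr] .
  have hm: "am * h = h * am" using hc[OF amr] .
  have hr: "r * h = h * r" using hc[of r] by simp
  define d where "d = an + an - 1"
  define s where "s = 1 + r * h"
  define u where "u = d * s"
  have hn2: "h * (an * z) = an * (h * z)" for z by (simp add: mult.assoc[symmetric] hn)
  have dd: "d * d = 1 + (r + r + r + r)" by (simp add: d_def r_def algebra_simps)
  have ds: "d * s = s * d" by (simp add: d_def s_def r_def algebra_simps hn hn2)
  have hr': "h * r = r * h" using hr by simp
  have hr2: "h * (r * z) = r * (h * z)" for z by (simp add: mult.assoc[symmetric] hr')
  have ts: "(1 + (r + r + r + r)) * s = s * (1 + (r + r + r + r))"
    by (simp add: s_def algebra_simps hr' hr2)
  have h1': "s * s * (1 + (r + r + r + r)) = 1" using h1 unfolding four_mult s_def .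
  have uu: "u * u = 1"
  proof -
    define T where "T = 1 + (r + r + r + r)"
    have tsT: "T * s = s * T" using ts by (simp only: T_def)
    have ddT: "d * d = T" using dd by (simp only: T_def)
    have h1T: "s * s * T = 1" using h1' by (simp only: T_def)
    have "u * u = d * ((s * d) * s)" by (simp only: u_def mult.assoc)
    also have "\<dots> = d * ((d * s) * s)" by (simp only: ds)
    also have "\<dots> = (d * d) * (s * s)" by (simp only: mult.assoc)
    also have "\<dots> = (T * s) * s" by (simp only: ddT mult.assoc)
    also have "\<dots> = (s * T) * s" by (simp only: tsT)
    also have "\<dots> = s * (T * s)" by (simp only: mult.assoc)
    also have "\<dots> = s * (s * T)" by (simp only: tsT)
    also have "\<dots> = 1" using h1T by (simp only: mult.assoc)
    finally show ?thesis .
  qed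
  define p where "p = (1/2::real) *\<^sub>R (1 + u)"
  have pp: "p * p = p"
  proof -
    have e: "(1 + u) * (1 + u) = (1 + u) + (1 + u)" using uu by (simp add: algebra_simps)
    have "p * p = ((1/2::real) * (1/2)) *\<^sub>R ((1 + u) * (1 + u))" by (simp add: p_def)
    also have "\<dots> = ((1/2::real) * (1/2)) *\<^sub>R (2 *\<^sub>R (1 + u))" using e by (simp add: scaleR_2)
    also have "\<dots> = p" by (simp add: p_def)
    finally show ?thesis .
  qed
  have pc: "y * p = p * y" if y1: "y * an = an * y" and y2: "y * h = h * y" for y
  proof -
    have y1': "y * (an * z) = an * (y * z)" for z by (simp add: mult.assoc[symmetric] y1)
    have y2': "y * (h * z) = h * (y * z)" for z by (simp add: mult.assoc[symmetric] y2)
    have "y * u = u * y"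
      by (simp add: u_def d_def s_def r_def algebra_simps y1 y2 y1' y2' hn hn2)
    then show ?thesis by (simp add: p_def algebra_simps)
  qed
  have pa: "a * p = p * a" by (rule pc) (simp_all add: c1 ha)
  have pam: "am * p = p * am" by (rule pc) (simp_all add: c3 hm)
  have pan: "an * p = p * an" by (rule pc) (simp_all add: hn)
  have ph: "h * p = p * h" by (rule pc) (simp_all add: hn)
  define g where "g = p - an"
  have half: "(1/2::real) *\<^sub>R (an + an) = an" by (simp flip: scaleR_2)
  have e1: "1 + u = (an + an) + d * (r * h)" by (simp add: u_def s_def d_def algebra_simps)
  have "p = (1/2::real) *\<^sub>R (an + an) + (1/2::real) *\<^sub>R (d * (r * h))"
    unfolding p_def e1 by (rule scaleR_add_right)
  then have g1: "g = (1/2::real) *\<^sub>R (d * (r * h))" using half by (simp add: g_def)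
  have dr: "d * r = r * d" by (simp add: d_def r_def algebra_simps)
  have g2: "g = r * ((1/2::real) *\<^sub>R (d * h))"
    unfolding g1 by (simp add: mult.assoc[symmetric] dr)
  have rY: "r * ((1/2::real) *\<^sub>R (d * h)) = ((1/2::real) *\<^sub>R (d * h)) * r"
  proof -
    have "r * (d * h) = (r * d) * h" by (simp add: mult.assoc)
    also have "\<dots> = d * (r * h)" by (simp add: dr[symmetric] mult.assoc)
    also have "\<dots> = (d * h) * r" by (simp add: hr mult.assoc)
    finally have "r * (d * h) = (d * h) * r" .
    then show ?thesis by simp
  qed
  have Sg: "SQN g" unfolding g2 by (rule SQN_mult_comm[OF Sr rY])
  have gc: "y * g = g * y" if "y * an = an * y" "y * h = h * y" for y
    using pc[OF that] that(1) by (simp add: g_def algebra_simps)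
  have "invertible_el (cc 1 - g)" by (rule SQN_inv[OF Sg]) simp
  then have inv1g: "invertible_el (1 - g)" by simp
  define wi where "wi = inv_of (1 - g)"
  have W: "(1 - g) * wi = 1" "wi * (1 - g) = 1" using inv_of[OF inv1g] by (simp_all add: wi_def)
  have wc: "y * wi = wi * y" if "y * an = an * y" "y * h = h * y" for y
  proof -
    have "(1 - g) * y = y * (1 - g)" using gc[OF that] by (simp add: algebra_simps)
    then show ?thesis using inv_comm[OF W] by metis
  qed
  have wa: "a * wi = wi * a" by (rule wc) (simp_all add: c1 ha)
  have wp: "p * wi = wi * p" by (rule wc) (simp_all add: pan ph)
  define x where "x = am * p * wi"
  have anp: "an * p = p * (1 - g)"
    by (simp add: g_def algebra_simps pp pan)
  have ax: "a * x = p"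
  proof -
    have "a * x = (a * am) * p * wi" by (simp add: x_def mult.assoc)
    also have "\<dots> = p * ((1 - g) * wi)" by (simp add: aam anp mult.assoc)
    also have "\<dots> = p" using W by simp
    finally show ?thesis .
  qed
  have xa: "x * a = a * x"
  proof -
    have "x * a = am * p * (wi * a)" by (simp add: x_def mult.assoc)
    also have "\<dots> = am * (p * a) * wi" by (simp add: wa mult.assoc)
    also have "\<dots> = (am * a) * p * wi" by (simp add: pa mult.assoc)
    also have "\<dots> = a * x" by (simp add: c2 x_def mult.assoc)
    finally show ?thesis .
  qed
  have xax: "x * a * x = x"
  proof -
    have "x * a * x = x * p" by (simp add: mult.assoc ax)
    also have "\<dots> = am * (p * (wi * p)) * 1" by (simp add: x_def mult.assoc)
    also have "\<dots> = am * (p * p) * wi" by (simp add: wp mult.assoc)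
    also have "\<dots> = x" by (simp add: pp x_def)
    finally show ?thesis .
  qed
  have bx: "a ^ (n + 2) * x = a * (an * p)"
  proof -
    have e: "n + 2 = Suc (Suc n)" by simp
    have "a ^ (n + 2) * x = (a ^ Suc n * a) * x" by (simp only: e power_Suc2)
    also have "\<dots> = a ^ Suc n * p" by (simp add: mult.assoc ax)
    finally show ?thesis by (simp add: an_def mult.assoc)
  qed
  have r1: "p * a = a * p" using pa by simp
  have r2: "p * (a * y) = a * (p * y)" for y by (simp add: mult.assoc[symmetric] r1)
  have r4: "p * (p * y) = p * y" for y by (simp add: mult.assoc[symmetric] pp)
  have r6: "an * (a * y) = a * (an * y)" for y by (simp add: mult.assoc[symmetric] c1)
  have r7: "p * an = an * p" using pan by simp
  have r8: "p * (an * y) = an * (p * y)" for y by (simp add: mult.assoc[symmetric] r7)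
  note R = r1 r2 pp r4 c1 r6 r7 r8
  define B where "B = a - a * (an * p)"
  define v where "v = a * (1 - p)"
  have vc: "a * (1 - p) = (1 - p) * a" by (simp add: algebra_simps R)
  have vn: "v ^ n = an * (1 - p)"
  proof -
    have "v ^ n = a ^ n * (1 - p) ^ n" unfolding v_def by (rule power_mult_comm[OF vc])
    also have "(1 - p) ^ n = 1 - p" by (rule idem_pow) (use n in \<open>simp_all add: algebra_simps pp\<close>)
    finally show ?thesis by (simp add: an_def)
  qed
  have vn2: "an * (1 - p) = - (g * (1 - p))" by (simp add: g_def algebra_simps R)
  have gp: "g * (1 - p) = (1 - p) * g"
    using gc[OF pan[symmetric] ph[symmetric]] by (simp add: algebra_simps)
  have "SQN (g * (1 - p))" by (rule SQN_mult_comm[OF Sg gp])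
  then have "SQN (v ^ n)" unfolding vn vn2 by (rule SQN_minus)
  moreover have "n > 0" using n by simp
  ultimately have Sv: "SQN v" by (rule SQN_power_imp)
  have qpc: "q * p = p * q" by (simp only: q_def left_diff_distrib right_diff_distrib mult.assoc r1 r2 r7)
  have Sqp: "SQN (q * p)" by (rule SQN_mult_comm[OF SQ qpc])
  have Bvq: "B = v + q * p" by (simp add: B_def v_def q_def algebra_simps R)
  have o1: "v * (q * p) = 0" by (simp add: v_def q_def algebra_simps R)
  have o2: "q * p * v = 0" by (simp add: v_def q_def algebra_simps R)
  have SB: "SQN B" unfolding Bvq by (rule SQN_add_orth[OF Sv Sqp o1 o2])
  have "quasinilpotent (a - a ^ (n + 2) * x)"
    unfolding bx using SQN_imp_qnil[OF SB] by (simp add: B_def)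
  then show ?thesis unfolding gpi_Hirano_invertible_def
    using xax xa n by (intro exI[of _ x]) (auto simp: ax)
qed

theorem theorem2p2:
  fixes a :: "'a::complex_banach_algebra_1"
  shows "(gpi_Hirano_invertible a
            \<longleftrightarrow> (\<exists>n::nat. n \<ge> 1 \<and> quasinilpotent (a - a ^ (n + 1))))
       \<and> ((\<exists>n::nat. n \<ge> 1 \<and> quasinilpotent (a - a ^ (n + 1)))
            \<longleftrightarrow> (\<exists>m n::nat. m \<ge> 1 \<and> n \<ge> 1 \<and> m \<noteq> n \<and> quasinilpotent (a ^ m - a ^ n)))"
proof (intro conjI iffI)
  assume "gpi_Hirano_invertible a"
  then obtain x n where x: "x * a * x = x" "a * x = x * a" "n \<ge> 1" "quasinilpotent (a - a ^ (n + 2) * x)"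
    unfolding gpi_Hirano_invertible_def by blast
  then have "SQN (a - a ^ (n + 2) * x)" using qnil_iff_SQN by blast
  then have "SQN (a - a ^ (n + 1))" using dir12 x(1,2) by blast
  then show "\<exists>n::nat. n \<ge> 1 \<and> quasinilpotent (a - a ^ (n + 1))"
    using x(3) qnil_iff_SQN by blast
next
  assume "\<exists>n::nat. n \<ge> 1 \<and> quasinilpotent (a - a ^ (n + 1))"
  then obtain n where n: "n \<ge> 1" "quasinilpotent (a - a ^ (n + 1))" by blast
  have "SQN (a - a ^ (n + 1))" using n(2) qnil_iff_SQN by blast
  then show "gpi_Hirano_invertible a" by (rule dir21[OF n(1)])
next
  assume "\<exists>n::nat. n \<ge> 1 \<and> quasinilpotent (a - a ^ (n + 1))"
  then obtain n where n: "n \<ge> 1" "quasinilpotent (a - a ^ (n + 1))" by blast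
  have "a ^ 1 - a ^ (n + 1) = a - a ^ (n + 1)" by simp
  then have "quasinilpotent (a ^ 1 - a ^ (n + 1))" using n(2) by simp
  moreover have "(1::nat) \<noteq> n + 1" using n(1) by simp
  ultimately show "\<exists>m n::nat. m \<ge> 1 \<and> n \<ge> 1 \<and> m \<noteq> n \<and> quasinilpotent (a ^ m - a ^ n)"
    by (intro exI[of _ 1] exI[of _ "n + 1"]) simp
next
  assume "\<exists>m n::nat. m \<ge> 1 \<and> n \<ge> 1 \<and> m \<noteq> n \<and> quasinilpotent (a ^ m - a ^ n)"
  then obtain m n where mn: "m \<ge> 1" "n \<ge> 1" "m \<noteq> n" "quasinilpotent (a ^ m - a ^ n)" by blast
  have "SQN (a ^ m - a ^ n)" using mn(4) qnil_iff_SQN by blast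
  then obtain k where k: "k \<ge> 1" "SQN (a - a ^ (k + 1))" using dir32[OF mn(1,2,3)] by blast
  then show "\<exists>n::nat. n \<ge> 1 \<and> quasinilpotent (a - a ^ (n + 1))"
    using qnil_iff_SQN by blast
qed

end
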